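(* Let $G$ be a group and $L,N$ normal subgroups with $L\geqslant N$; let $i\colon N\hookrightarrow L$ be the inclusion. Assume $\mathrm{H}^1(L/N)=\mathrm{Q}(L/N)$ and $\mathrm{H}^2_b(L/N)^G=0$. Then $\mathrm{H}^1(N)^G\cap i^*\mathrm{Q}(L)^G=i^*\mathrm{H}^1(L)^G$. In particular, this equality holds whenever $L/N$ is boundedly $2$-acyclic.
   Context: $\mathrm{Q}(H)$: homogeneous quasimorphisms on a group $H$; $\mathrm{H}^1(H)$: homomorphisms $H\to\mathbb{R}$. $\mathrm{Q}(L)^G$, $\mathrm{H}^1(L)^G$, $\mathrm{H}^1(N)^G$: the elements invariant under conjugation by $G$. $i^*$ denotes restriction to $N$. $\mathrm{H}^2_b$ is second bounded cohomology with trivial real coefficients; $G$ acts on $L/N$ by conjugation, hence on $\mathrm{H}^2_b(L/N)$, and $\mathrm{H}^2_b(L/N)^G$ is the invariant part. A group $\Lambda$ is boundedly $n$-acyclic if $\mathrm{H}^k_b(\Lambda)=0$ for $1\le k\le n$. *)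

theory Defs
  imports "HOL-Algebra.Algebra"
begin

definition hom_quasimorphisms :: "('a, 'm) monoid_scheme \<Rightarrow> ('a \<Rightarrow> real) set" ("Qm") where
  "Qm H = {f. f \<in> extensional (carrier H)
            \<and> (\<exists>D. \<forall>x\<in>carrier H. \<forall>y\<in>carrier H. \<bar>f (x \<otimes>\<^bsub>H\<^esub> y) - f x - f y\<bar> \<le> D)
            \<and> (\<forall>x\<in>carrier H. \<forall>n::int. f (x [^]\<^bsub>H\<^esub> n) = of_int n * f x)}"

definition real_homs :: "('a, 'm) monoid_scheme \<Rightarrow> ('a \<Rightarrow> real) set" ("H1") where
  "H1 H = {f. f \<in> extensional (carrier H)
            \<and> (\<forall>x\<in>carrier H. \<forall>y\<in>carrier H. f (x \<otimes>\<^bsub>H\<^esub> y) = f x + f y)}"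

definition conj_invariant :: "('a, 'm) monoid_scheme \<Rightarrow> 'a set \<Rightarrow> ('a \<Rightarrow> real) \<Rightarrow> bool" where
  "conj_invariant G S f \<longleftrightarrow>
     (\<forall>g\<in>carrier G. \<forall>x\<in>S. f (g \<otimes>\<^bsub>G\<^esub> x \<otimes>\<^bsub>G\<^esub> inv\<^bsub>G\<^esub> g) = f x)"

definition chain_dom :: "('a, 'm) monoid_scheme \<Rightarrow> nat \<Rightarrow> 'a list set" where
  "chain_dom H n = {xs. length xs = n \<and> set xs \<subseteq> carrier H}"

definition bounded_cochain :: "('a, 'm) monoid_scheme \<Rightarrow> nat \<Rightarrow> ('a list \<Rightarrow> real) \<Rightarrow> bool" where
  "bounded_cochain H n c \<longleftrightarrow> (\<exists>B. \<forall>xs\<in>chain_dom H n. \<bar>c xs\<bar> \<le> B)"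

text \<open>Standard inhomogeneous coboundary; applied to a list of length n+1:
  (dc)(x0,...,xn) = c(x1,...,xn) + sum_{i=1}^{n} (-1)^i c(x0,...,x(i-1)xi,...,xn)
                    + (-1)^(n+1) c(x0,...,x(n-1)).\<close>

definition coboundary :: "('a, 'm) monoid_scheme \<Rightarrow> nat \<Rightarrow> ('a list \<Rightarrow> real) \<Rightarrow> 'a list \<Rightarrow> real" where
  "coboundary H n c xs =
     c (tl xs)
     + (\<Sum>i<n. (-1) ^ (i + 1) * c (take i xs @ [xs ! i \<otimes>\<^bsub>H\<^esub> xs ! (i + 1)] @ drop (i + 2) xs))
     + (-1) ^ (n + 1) * c (butlast xs)"

definition bounded_cocycle :: "('a, 'm) monoid_scheme \<Rightarrow> nat \<Rightarrow> ('a list \<Rightarrow> real) \<Rightarrow> bool" where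
  "bounded_cocycle H n c \<longleftrightarrow> bounded_cochain H n c \<and>
     (\<forall>xs\<in>chain_dom H (Suc n). coboundary H n c xs = 0)"

definition bounded_coboundary :: "('a, 'm) monoid_scheme \<Rightarrow> nat \<Rightarrow> ('a list \<Rightarrow> real) \<Rightarrow> bool" where
  "bounded_coboundary H n c \<longleftrightarrow>
     (\<exists>b. bounded_cochain H (n - 1) b \<and> (\<forall>xs\<in>chain_dom H n. c xs = coboundary H (n - 1) b xs))"

definition Hb_vanishes :: "('a, 'm) monoid_scheme \<Rightarrow> nat \<Rightarrow> bool" where
  "Hb_vanishes H n \<longleftrightarrow> (\<forall>c. bounded_cocycle H n c \<longrightarrow> bounded_coboundary H n c)"

definition boundedly_acyclic :: "('a, 'm) monoid_scheme \<Rightarrow> nat \<Rightarrow> bool" where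
  "boundedly_acyclic H n \<longleftrightarrow> (\<forall>k. 1 \<le> k \<and> k \<le> n \<longrightarrow> Hb_vanishes H k)"

text \<open>H^n_b(H)^A = 0 where A acts on H by the maps alpha g (by automorphisms):
every bounded cocycle whose class is invariant under all alpha g is a bounded
coboundary. The action on cochains is (g.c)(x1,...,xn) = c(alpha g x1,...,alpha g xn).\<close>

definition Hb_inv_vanishes ::
  "('b, 'm) monoid_scheme \<Rightarrow> 'g set \<Rightarrow> ('g \<Rightarrow> 'b \<Rightarrow> 'b) \<Rightarrow> nat \<Rightarrow> bool" where
  "Hb_inv_vanishes H A alpha n \<longleftrightarrow>
     (\<forall>c. bounded_cocycle H n c
          \<and> (\<forall>g\<in>A. bounded_coboundary H n (\<lambda>xs. c (map (alpha g) xs) - c xs))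
          \<longrightarrow> bounded_coboundary H n c)"

text \<open>Conjugation action of G on the coset space L/N (N normal in G):
  g . (xN) = g x N g^{-1} = (g x g^{-1}) N.\<close>

definition coset_conj :: "('a, 'm) monoid_scheme \<Rightarrow> 'a \<Rightarrow> 'a set \<Rightarrow> 'a set" where
  "coset_conj G g S = (\<lambda>y. g \<otimes>\<^bsub>G\<^esub> y \<otimes>\<^bsub>G\<^esub> inv\<^bsub>G\<^esub> g) ` S"

end

theory Submission
  imports Defs
begin

lemma small_zero:
  fixes a B :: real
  assumes "\<And>k::nat. real k * \<bar>a\<bar> \<le> B"
  shows "a = 0"
proof (rule ccontr)
  assume "a \<noteq> 0"
  then have "0 < \<bar>a\<bar>" by simp
  then obtain k where "B < real k * \<bar>a\<bar>" using ex_less_of_nat_mult by blast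
  with assms[of k] show False by simp
qed

lemma len2: "length xs = 2 \<Longrightarrow> \<exists>a b. xs = [a, b]"
  by (auto simp: numeral_2_eq_2 length_Suc_conv)

lemma len3: "length xs = 3 \<Longrightarrow> \<exists>a b c. xs = [a, b, c]"
  by (auto simp: numeral_3_eq_3 length_Suc_conv)

lemma cob2: fixes H :: "('b, 'c) monoid_scheme" shows "coboundary H 2 c [U, V, W] =
   c [V, W] - c [U \<otimes>\<^bsub>H\<^esub> V, W] + c [U, V \<otimes>\<^bsub>H\<^esub> W] - c [U, V]"
  by (simp add: coboundary_def numeral_2_eq_2)

lemma cob1: fixes H :: "('b, 'c) monoid_scheme" shows "coboundary H 1 b [U, V] = b [V] - b [U \<otimes>\<^bsub>H\<^esub> V] + b [U]"
  by (simp add: coboundary_def)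

lemma cob1': fixes H :: "('b, 'c) monoid_scheme" shows "coboundary H (Suc 0) b [U, V] = b [V] - b [U \<otimes>\<^bsub>H\<^esub> V] + b [U]"
  by (simp add: coboundary_def)

lemma cob1_zero: "coboundary H 1 (\<lambda>_. 0) xs = 0"
  by (simp add: coboundary_def)

locale qmctx = group +
  fixes L N :: "'a set" and \<phi> :: "'a \<Rightarrow> real"
  assumes LG: "L \<lhd> G" and NG: "N \<lhd> G" and NL: "N \<subseteq> L"
    and phiQ: "\<phi> \<in> Qm (G\<lparr>carrier := L\<rparr>)"
    and phiinv: "conj_invariant G L \<phi>"
    and phiadd: "\<And>x y. x \<in> N \<Longrightarrow> y \<in> N \<Longrightarrow> \<phi> (x \<otimes> y) = \<phi> x + \<phi> y"
begin

lemma Lsub: "subgroup L G" by (rule normal_imp_subgroup[OF LG])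
lemma Nsub: "subgroup N G" by (rule normal_imp_subgroup[OF NG])
lemma LC: "x \<in> L \<Longrightarrow> x \<in> carrier G" by (rule subgroup.mem_carrier[OF Lsub])
lemma NC: "x \<in> N \<Longrightarrow> x \<in> carrier G" by (rule subgroup.mem_carrier[OF Nsub])
lemma Lm: "x \<in> L \<Longrightarrow> y \<in> L \<Longrightarrow> x \<otimes> y \<in> L" by (rule subgroup.m_closed[OF Lsub])
lemma Nm: "x \<in> N \<Longrightarrow> y \<in> N \<Longrightarrow> x \<otimes> y \<in> N" by (rule subgroup.m_closed[OF Nsub])
lemma Li: "x \<in> L \<Longrightarrow> inv x \<in> L" by (rule subgroup.m_inv_closed[OF Lsub])
lemma Ni: "x \<in> N \<Longrightarrow> inv x \<in> N" by (rule subgroup.m_inv_closed[OF Nsub])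
lemma L1: "\<one> \<in> L" by (rule subgroup.one_closed[OF Lsub])
lemma N1: "\<one> \<in> N" by (rule subgroup.one_closed[OF Nsub])
lemma Lconj: "g \<in> carrier G \<Longrightarrow> x \<in> L \<Longrightarrow> g \<otimes> x \<otimes> inv g \<in> L"
  by (rule normal.inv_op_closed2[OF LG])
lemma Nconj: "g \<in> carrier G \<Longrightarrow> x \<in> N \<Longrightarrow> g \<otimes> x \<otimes> inv g \<in> N"
  by (rule normal.inv_op_closed2[OF NG])
lemma Nconj2: "g \<in> carrier G \<Longrightarrow> x \<in> N \<Longrightarrow> inv g \<otimes> x \<otimes> g \<in> N"
  by (rule normal.inv_op_closed1[OF NG])

lemma defect: "\<exists>D. \<forall>x\<in>L. \<forall>y\<in>L. \<bar>\<phi> (x \<otimes> y) - \<phi> x - \<phi> y\<bar> \<le> D"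
  using phiQ by (simp add: hom_quasimorphisms_def)

lemma Lpow: "x \<in> L \<Longrightarrow> x [^] (k::nat) \<in> L"
  by (induct k) (auto simp: L1 Lm)

lemma phipow: assumes "x \<in> L" shows "\<phi> (x [^] (k::nat)) = real k * \<phi> x"
proof -
  have "\<phi> (x [^]\<^bsub>G\<lparr>carrier := L\<rparr>\<^esub> (int k)) = of_int (int k) * \<phi> x"
    using phiQ assms by (simp add: hom_quasimorphisms_def)
  moreover have "x [^]\<^bsub>G\<lparr>carrier := L\<rparr>\<^esub> (int k) = x [^] k"
    by (metis int_pow_int nat_pow_consistent)
  ultimately show ?thesis by simp
qed

lemma phi1: "\<phi> \<one> = 0"
  using phipow[OF L1, of 0] by simp

lemma phiconj: "g \<in> carrier G \<Longrightarrow> x \<in> L \<Longrightarrow> \<phi> (g \<otimes> x \<otimes> inv g) = \<phi> x"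
  using phiinv by (simp add: conj_invariant_def)

lemma phiconj2: "g \<in> carrier G \<Longrightarrow> x \<in> L \<Longrightarrow> \<phi> (inv g \<otimes> x \<otimes> g) = \<phi> x"
  using phiconj[of "inv g" x] by simp

lemma powstep: assumes x: "x \<in> L" and n: "n \<in> N"
  shows "\<exists>m\<in>N. (x \<otimes> n) [^] k = x [^] k \<otimes> m \<and> \<phi> m = real k * \<phi> n"
proof (induct k)
  case 0
  then show ?case using N1 phi1 by (intro bexI[of _ \<one>]) auto
next
  case (Suc k)
  then obtain m where m: "m \<in> N" "(x \<otimes> n) [^] k = x [^] k \<otimes> m" "\<phi> m = real k * \<phi> n" by blast
  have xc: "x \<in> carrier G" using LC x by blast
  have nc: "n \<in> carrier G" using NC n by blast
  have mc: "m \<in> carrier G" using NC m by blast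
  have pc: "x [^] k \<in> carrier G" using xc by simp
  define m' where "m' = inv x \<otimes> m \<otimes> x \<otimes> n"
  have "inv x \<otimes> m \<otimes> x \<in> N" using Nconj2 xc m by blast
  hence m'N: "m' \<in> N" using Nm n m'_def by blast
  have "\<phi> m' = \<phi> (inv x \<otimes> m \<otimes> x) + \<phi> n" using phiadd \<open>inv x \<otimes> m \<otimes> x \<in> N\<close> n m'_def by blast
  also have "\<phi> (inv x \<otimes> m \<otimes> x) = \<phi> m" using phiconj2 xc m NL by blast
  finally have e1: "\<phi> m' = real (Suc k) * \<phi> n" using m by (simp add: algebra_simps)
  have "(x \<otimes> n) [^] Suc k = x [^] k \<otimes> m \<otimes> (x \<otimes> n)" using m by simp
  also have "\<dots> = x [^] k \<otimes> x \<otimes> m'"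
  proof -
    have "x \<otimes> m' = m \<otimes> (x \<otimes> n)" using xc nc mc by (simp add: m'_def m_assoc[symmetric])
    thus ?thesis using xc nc mc pc m'N NC by (simp add: m_assoc)
  qed
  also have "\<dots> = x [^] Suc k \<otimes> m'" by simp
  finally show ?case using m'N e1 by blast
qed

lemma phiright: assumes x: "x \<in> L" and n: "n \<in> N" shows "\<phi> (x \<otimes> n) = \<phi> x + \<phi> n"
proof -
  obtain D where D: "\<forall>x\<in>L. \<forall>y\<in>L. \<bar>\<phi> (x \<otimes> y) - \<phi> x - \<phi> y\<bar> \<le> D" using defect by blast
  have "real k * \<bar>\<phi> (x \<otimes> n) - \<phi> x - \<phi> n\<bar> \<le> D" for k
  proof -
    obtain m where m: "m \<in> N" "(x \<otimes> n) [^] k = x [^] k \<otimes> m" "\<phi> m = real k * \<phi> n"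
      using powstep[OF x n] by blast
    have xn: "x \<otimes> n \<in> L" using x n NL Lm by blast
    have "\<phi> ((x \<otimes> n) [^] k) = real k * \<phi> (x \<otimes> n)" using phipow[OF xn] .
    moreover have "\<bar>\<phi> (x [^] k \<otimes> m) - \<phi> (x [^] k) - \<phi> m\<bar> \<le> D"
      using D Lpow[OF x] m(1) NL by blast
    ultimately have "\<bar>real k * \<phi> (x \<otimes> n) - real k * \<phi> x - real k * \<phi> n\<bar> \<le> D"
      using m phipow[OF x] by simp
    moreover have "real k * \<bar>\<phi> (x \<otimes> n) - \<phi> x - \<phi> n\<bar> = \<bar>real k * \<phi> (x \<otimes> n) - real k * \<phi> x - real k * \<phi> n\<bar>"
    proof -
      have "\<bar>real k * (\<phi> (x \<otimes> n) - \<phi> x - \<phi> n)\<bar> = real k * \<bar>\<phi> (x \<otimes> n) - \<phi> x - \<phi> n\<bar>"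
        by (simp add: abs_mult)
      thus ?thesis by (simp add: right_diff_distrib)
    qed
    ultimately show ?thesis by linarith
  qed
  hence "\<phi> (x \<otimes> n) - \<phi> x - \<phi> n = 0" by (rule small_zero)
  thus ?thesis by simp
qed

lemma phileft: assumes x: "x \<in> L" and n: "n \<in> N" shows "\<phi> (n \<otimes> x) = \<phi> n + \<phi> x"
proof -
  have xc: "x \<in> carrier G" using LC x by blast
  have nc: "n \<in> carrier G" using NC n by blast
  have "n \<otimes> x = x \<otimes> (inv x \<otimes> n \<otimes> x)" using xc nc by (simp add: m_assoc[symmetric])
  moreover have "inv x \<otimes> n \<otimes> x \<in> N" using Nconj2 xc n by blast
  ultimately have "\<phi> (n \<otimes> x) = \<phi> x + \<phi> (inv x \<otimes> n \<otimes> x)" using phiright x by simp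
  also have "\<phi> (inv x \<otimes> n \<otimes> x) = \<phi> n" using phiconj2 xc n NL by blast
  finally show ?thesis by simp
qed


lemma cancel1: "x \<in> carrier G \<Longrightarrow> y \<in> carrier G \<Longrightarrow> inv x \<otimes> (x \<otimes> y) = y"
  by (simp add: m_assoc[symmetric])
lemma cancel2: "x \<in> carrier G \<Longrightarrow> y \<in> carrier G \<Longrightarrow> x \<otimes> (inv x \<otimes> y) = y"
  by (simp add: m_assoc[symmetric])

abbreviation "Lg \<equiv> G\<lparr>carrier := L\<rparr>"
abbreviation "QQ \<equiv> Lg Mod N"

lemma rc_eq: "N #>\<^bsub>Lg\<^esub> x = N #> x" by (simp add: r_coset_def)
lemma sm_eq: "A <#>\<^bsub>Lg\<^esub> B = A <#> B" by (simp add: set_mult_def)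

lemma carrQ: "U \<in> carrier QQ \<longleftrightarrow> (\<exists>x\<in>L. U = N #> x)"
  by (auto simp: FactGroup_def RCOSETS_def rc_eq)

lemma multQ: "x \<in> L \<Longrightarrow> y \<in> L \<Longrightarrow> (N #> x) \<otimes>\<^bsub>QQ\<^esub> (N #> y) = N #> (x \<otimes> y)"
  by (simp add: FactGroup_def sm_eq normal.rcos_sum[OF NG] LC)

lemma multG: "x \<in> L \<Longrightarrow> y \<in> L \<Longrightarrow> (N #> x) <#> (N #> y) = N #> (x \<otimes> y)"
  by (simp add: normal.rcos_sum[OF NG] LC)

lemma coset_eq2: assumes "x \<in> L" "x' \<in> L" "N #> x = N #> x'" shows "\<exists>n\<in>N. x' = n \<otimes> x"
proof -
  have "x' \<in> N #> x'" by (rule rcos_self[OF LC[OF assms(2)] Nsub])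
  hence "x' \<in> N #> x" using assms(3) by simp
  thus ?thesis by (auto simp: r_coset_def)
qed

lemma cconj: assumes g: "g \<in> carrier G" and x: "x \<in> L"
  shows "coset_conj G g (N #> x) = N #> (g \<otimes> x \<otimes> inv g)"
proof
  have xc: "x \<in> carrier G" using LC x .
  show "coset_conj G g (N #> x) \<subseteq> N #> (g \<otimes> x \<otimes> inv g)"
  proof
    fix z assume "z \<in> coset_conj G g (N #> x)"
    then obtain h where h: "h \<in> N" "z = g \<otimes> (h \<otimes> x) \<otimes> inv g"
      by (auto simp: coset_conj_def r_coset_def)
    have hc: "h \<in> carrier G" using NC h(1) .
    have "z = (g \<otimes> h \<otimes> inv g) \<otimes> (g \<otimes> x \<otimes> inv g)"
      using h(2) g hc xc by (simp add: m_assoc cancel1)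
    moreover have "g \<otimes> h \<otimes> inv g \<in> N" using Nconj g h(1) .
    ultimately show "z \<in> N #> (g \<otimes> x \<otimes> inv g)" by (auto simp: r_coset_def)
  qed
  show "N #> (g \<otimes> x \<otimes> inv g) \<subseteq> coset_conj G g (N #> x)"
  proof
    fix z assume "z \<in> N #> (g \<otimes> x \<otimes> inv g)"
    then obtain h where h: "h \<in> N" "z = h \<otimes> (g \<otimes> x \<otimes> inv g)"
      by (auto simp: r_coset_def)
    have hc: "h \<in> carrier G" using NC h(1) .
    have "z = g \<otimes> ((inv g \<otimes> h \<otimes> g) \<otimes> x) \<otimes> inv g"
      using h(2) g hc xc by (simp add: m_assoc cancel2)
    moreover have "inv g \<otimes> h \<otimes> g \<in> N" using Nconj2 g h(1) .
    ultimately show "z \<in> coset_conj G g (N #> x)"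
      unfolding coset_conj_def r_coset_def by blast
  qed
qed

definition D where "D x y = \<phi> (x \<otimes> y) - \<phi> x - \<phi> y"

lemma Dinv: assumes x: "x \<in> L" and y: "y \<in> L" and n: "n \<in> N" and n': "n' \<in> N"
  shows "D (n \<otimes> x) (n' \<otimes> y) = D x y"
proof -
  have xc: "x \<in> carrier G" using LC x .
  have yc: "y \<in> carrier G" using LC y .
  have nc: "n \<in> carrier G" using NC n .
  have n'c: "n' \<in> carrier G" using NC n' .
  have m1: "inv y \<otimes> n' \<otimes> y \<in> N" using Nconj2 yc n' .
  have e1: "n \<otimes> x \<otimes> (n' \<otimes> y) = n \<otimes> ((x \<otimes> y) \<otimes> (inv y \<otimes> n' \<otimes> y))"
    using xc yc nc n'c by (simp add: m_assoc cancel2)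
  have xy: "x \<otimes> y \<in> L" using Lm x y .
  have "\<phi> (n \<otimes> x \<otimes> (n' \<otimes> y)) = \<phi> n + \<phi> ((x \<otimes> y) \<otimes> (inv y \<otimes> n' \<otimes> y))"
    unfolding e1 by (rule phileft[OF Lm[OF xy NL[THEN subsetD, OF m1]] n])
  also have "\<dots> = \<phi> n + \<phi> (x \<otimes> y) + \<phi> (inv y \<otimes> n' \<otimes> y)"
    using phiright[OF xy m1] by simp
  also have "\<phi> (inv y \<otimes> n' \<otimes> y) = \<phi> n'" using phiconj2 yc NL n' by blast
  finally show ?thesis
    unfolding D_def using phileft[OF x n] phileft[OF y n'] by simp
qed

definition rep where "rep U = (SOME x. x \<in> L \<and> U = N #> x)"
definition cc where "cc xs = D (rep (xs ! 0)) (rep (xs ! 1))"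

lemma rep: assumes "x \<in> L" shows "rep (N #> x) \<in> L" "\<exists>n\<in>N. rep (N #> x) = n \<otimes> x"
proof -
  have "rep (N #> x) \<in> L \<and> N #> x = N #> rep (N #> x)"
    unfolding rep_def by (rule someI[of _ x]) (use assms in auto)
  thus "rep (N #> x) \<in> L" "\<exists>n\<in>N. rep (N #> x) = n \<otimes> x"
    using coset_eq2[OF assms] by auto
qed

lemma cc_val: assumes "x \<in> L" "y \<in> L" shows "cc [N #> x, N #> y] = D x y"
proof -
  obtain n where "n \<in> N" "rep (N #> x) = n \<otimes> x" using rep(2)[OF assms(1)] by blast
  moreover obtain n' where "n' \<in> N" "rep (N #> y) = n' \<otimes> y" using rep(2)[OF assms(2)] by blast
  ultimately show ?thesis unfolding cc_def using Dinv assms by simp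
qed

lemma chain2: assumes "xs \<in> chain_dom QQ 2" obtains x y where "x \<in> L" "y \<in> L" "xs = [N #> x, N #> y]"
proof -
  obtain U V where "xs = [U, V]" using assms len2[of xs] unfolding chain_dom_def by blast
  with assms show ?thesis using that by (auto simp: chain_dom_def carrQ)
qed

lemma chain3: assumes "xs \<in> chain_dom QQ 3"
  obtains x y z where "x \<in> L" "y \<in> L" "z \<in> L" "xs = [N #> x, N #> y, N #> z]"
proof -
  obtain U V W where "xs = [U, V, W]" using assms len3[of xs] unfolding chain_dom_def by blast
  with assms show ?thesis using that by (auto simp: chain_dom_def carrQ)
qed

lemma chain1: assumes "x \<in> L" shows "[N #> x] \<in> chain_dom QQ 1"
  using assms by (auto simp: chain_dom_def carrQ)

lemma cc_cocycle: "bounded_cocycle QQ 2 cc"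
proof -
  obtain B where B: "\<forall>x\<in>L. \<forall>y\<in>L. \<bar>\<phi> (x \<otimes> y) - \<phi> x - \<phi> y\<bar> \<le> B" using defect by blast
  have "bounded_cochain QQ 2 cc"
    unfolding bounded_cochain_def
  proof (intro exI ballI)
    fix xs assume "xs \<in> chain_dom QQ 2"
    then obtain x y where "x \<in> L" "y \<in> L" "xs = [N #> x, N #> y]" by (rule chain2)
    thus "\<bar>cc xs\<bar> \<le> B" using B cc_val by (simp add: D_def)
  qed
  moreover have "\<forall>xs\<in>chain_dom QQ (Suc 2). coboundary QQ 2 cc xs = 0"
  proof
    fix xs assume "xs \<in> chain_dom QQ (Suc 2)"
    then obtain x y z where xyz: "x \<in> L" "y \<in> L" "z \<in> L" "xs = [N #> x, N #> y, N #> z]"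
      using chain3 by (simp add: numeral_3_eq_3) blast
    have "coboundary QQ 2 cc xs = D y z - D (x \<otimes> y) z + D x (y \<otimes> z) - D x y"
      using xyz by (simp add: cob2 multQ multG cc_val Lm)
    also have "\<dots> = 0" using xyz by (simp add: D_def m_assoc LC)
    finally show "coboundary QQ 2 cc xs = 0" .
  qed
  ultimately show ?thesis by (simp add: bounded_cocycle_def)
qed

lemma Dconj: assumes g: "g \<in> carrier G" and x: "x \<in> L" and y: "y \<in> L"
  shows "D (g \<otimes> x \<otimes> inv g) (g \<otimes> y \<otimes> inv g) = D x y"
proof -
  have "g \<otimes> x \<otimes> inv g \<otimes> (g \<otimes> y \<otimes> inv g) = g \<otimes> (x \<otimes> y) \<otimes> inv g"
    using g LC[OF x] LC[OF y] by (simp add: m_assoc cancel1)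
  thus ?thesis unfolding D_def using phiconj g x y Lm by simp
qed

lemma cc_inv: "g \<in> carrier G \<Longrightarrow> bounded_coboundary QQ 2 (\<lambda>xs. cc (map (coset_conj G g) xs) - cc xs)"
  unfolding bounded_coboundary_def
proof (intro exI[of _ "\<lambda>_. 0"] conjI ballI)
  show "bounded_cochain QQ (2 - 1) (\<lambda>_. 0)" by (auto simp: bounded_cochain_def)
  fix xs assume g: "g \<in> carrier G" and "xs \<in> chain_dom QQ 2"
  obtain x y where xy: "x \<in> L" "y \<in> L" "xs = [N #> x, N #> y]"
    using chain2[OF \<open>xs \<in> chain_dom QQ 2\<close>] by blast
  have "cc (map (coset_conj G g) xs) - cc xs = 0"
    using xy g by (simp add: cconj cc_val Lconj Dconj)
  thus "cc (map (coset_conj G g) xs) - cc xs = coboundary QQ (2 - 1) (\<lambda>_. 0) xs"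
    by (simp add: coboundary_def)
qed

lemma main:
  assumes hb: "Hb_inv_vanishes QQ (carrier G) (coset_conj G) 2"
  shows "\<exists>\<psi>. \<psi> \<in> H1 Lg \<and> conj_invariant G L \<psi> \<and> (\<forall>n\<in>N. \<psi> n = \<phi> n)"
proof -
  have "bounded_coboundary QQ 2 cc"
    using hb cc_cocycle cc_inv unfolding Hb_inv_vanishes_def by blast
  then obtain b where bb: "bounded_cochain QQ 1 b"
    and bc: "\<forall>xs\<in>chain_dom QQ 2. cc xs = coboundary QQ 1 b xs"
    unfolding bounded_coboundary_def by auto
  define \<beta> where "\<beta> x = b [N #> x]" for x
  have \<beta>D: "D x y = \<beta> y - \<beta> (x \<otimes> y) + \<beta> x" if "x \<in> L" "y \<in> L" for x y
  proof -
    have "[N #> x, N #> y] \<in> chain_dom QQ 2" using that by (auto simp: chain_dom_def carrQ)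
    hence "cc [N #> x, N #> y] = coboundary QQ 1 b [N #> x, N #> y]" using bc by blast
    thus ?thesis using that by (simp add: cc_val cob1' multQ multG \<beta>_def)
  qed
  obtain B where B: "\<forall>x\<in>L. \<bar>\<beta> x\<bar> \<le> B"
    using bb chain1 unfolding bounded_cochain_def \<beta>_def by blast
  have \<beta>1: "\<beta> \<one> = 0" using \<beta>D[OF L1 L1] phi1 by (simp add: D_def)
  have \<beta>N: "\<beta> n = 0" if "n \<in> N" for n
  proof -
    have "N #> n = N" by (rule coset_join2[OF NC[OF that] Nsub that])
    moreover have "N #> \<one> = N" by (rule coset_join2[OF one_closed Nsub N1])
    ultimately show ?thesis using \<beta>1 by (simp add: \<beta>_def)
  qed
  have \<beta>conj: "\<beta> (g \<otimes> x \<otimes> inv g) = \<beta> x" if g: "g \<in> carrier G" and x: "x \<in> L" for g x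
  proof -
    define h where "h x = \<beta> (g \<otimes> x \<otimes> inv g) - \<beta> x" for x
    have hadd: "h (x \<otimes> y) = h x + h y" if "x \<in> L" "y \<in> L" for x y
    proof -
      have "D (g \<otimes> x \<otimes> inv g) (g \<otimes> y \<otimes> inv g) = D x y" using Dconj g that by blast
      moreover have "g \<otimes> x \<otimes> inv g \<otimes> (g \<otimes> y \<otimes> inv g) = g \<otimes> (x \<otimes> y) \<otimes> inv g"
        using g LC that by (simp add: m_assoc cancel1)
      ultimately show ?thesis
        using \<beta>D[OF that] \<beta>D[OF Lconj[OF g that(1)] Lconj[OF g that(2)]] unfolding h_def by simp
    qed
    have hpow: "h (x [^] k) = real k * h x" for k :: nat
    proof (induct k)
      case 0
      then show ?case using \<beta>1 g by (simp add: h_def)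
    next
      case (Suc k)
      then show ?case using hadd[OF Lpow[OF x] x] by (simp add: algebra_simps)
    qed
    have "real k * \<bar>h x\<bar> \<le> 2 * B" for k :: nat
    proof -
      have "\<bar>h (x [^] k)\<bar> \<le> 2 * B"
        using B Lpow[OF x] Lconj[OF g Lpow[OF x]] unfolding h_def
        by (smt (verit) )
      thus ?thesis using hpow by (simp add: abs_mult)
    qed
    hence "h x = 0" by (rule small_zero)
    thus ?thesis by (simp add: h_def)
  qed
  define \<psi> where "\<psi> = restrict (\<lambda>x. \<phi> x + \<beta> x) L"
  have "\<psi> \<in> H1 Lg"
    unfolding real_homs_def
  proof (intro CollectI conjI ballI)
    show "\<psi> \<in> extensional (carrier Lg)" by (simp add: \<psi>_def)
    fix x y assume "x \<in> carrier Lg" "y \<in> carrier Lg"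
    hence xy: "x \<in> L" "y \<in> L" by auto
    show "\<psi> (x \<otimes>\<^bsub>Lg\<^esub> y) = \<psi> x + \<psi> y"
      using xy \<beta>D[OF xy] Lm[OF xy] by (simp add: \<psi>_def D_def)
  qed
  moreover have "conj_invariant G L \<psi>"
    unfolding conj_invariant_def
    using \<beta>conj phiconj Lconj by (simp add: \<psi>_def)
  moreover have "\<forall>n\<in>N. \<psi> n = \<phi> n" using \<beta>N NL by (auto simp: \<psi>_def)
  ultimately show ?thesis by blast
qed

end

lemma H1_Qm:
  assumes H: "group H" and f: "f \<in> H1 H"
  shows "f \<in> Qm H"
proof -
  interpret H: group H by (rule H)
  have add: "\<And>x y. x \<in> carrier H \<Longrightarrow> y \<in> carrier H \<Longrightarrow> f (x \<otimes>\<^bsub>H\<^esub> y) = f x + f y"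
    using f by (simp add: real_homs_def)
  have f1: "f \<one>\<^bsub>H\<^esub> = 0" using add[of "\<one>\<^bsub>H\<^esub>" "\<one>\<^bsub>H\<^esub>"] by simp
  have fpow: "f (x [^]\<^bsub>H\<^esub> (k::nat)) = real k * f x" if x: "x \<in> carrier H" for x k
  proof (induct k)
    case 0 then show ?case using f1 by simp
  next
    case (Suc k) then show ?case using add[of "x [^]\<^bsub>H\<^esub> k" x] x by (simp add: algebra_simps)
  qed
  have finv: "f (inv\<^bsub>H\<^esub> x) = - f x" if x: "x \<in> carrier H" for x
    using add[of x "inv\<^bsub>H\<^esub> x"] x f1 by simp
  have "\<forall>x\<in>carrier H. \<forall>n::int. f (x [^]\<^bsub>H\<^esub> n) = of_int n * f x"
  proof (intro ballI allI)
    fix x and n :: int assume x: "x \<in> carrier H"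
    show "f (x [^]\<^bsub>H\<^esub> n) = of_int n * f x"
    proof (cases "n < 0")
      case True
      then obtain m :: nat where m: "n = - int m" by (metis less_le neg_0_less_iff_less nonneg_int_cases minus_minus)
      have "x [^]\<^bsub>H\<^esub> n = inv\<^bsub>H\<^esub> (x [^]\<^bsub>H\<^esub> m)" using m x H.int_pow_neg_int by simp
      then show ?thesis using m x finv fpow by simp
    next
      case False
      then obtain m :: nat where m: "n = int m" by (metis nonneg_int_cases not_less)
      show ?thesis using m x fpow by (simp add: int_pow_int)
    qed
  qed
  moreover have "\<exists>D. \<forall>x\<in>carrier H. \<forall>y\<in>carrier H. \<bar>f (x \<otimes>\<^bsub>H\<^esub> y) - f x - f y\<bar> \<le> D"
    using add by (intro exI[of _ 0]) simp
  ultimately show ?thesis using f by (simp add: hom_quasimorphisms_def real_homs_def)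
qed

lemma key:
  fixes G :: "('a, 'm) monoid_scheme" and L N :: "'a set"
  assumes grp: "group G" and LG: "L \<lhd> G" and NG: "N \<lhd> G" and NL: "N \<subseteq> L"
    and hb: "Hb_inv_vanishes (G\<lparr>carrier := L\<rparr> Mod N) (carrier G) (coset_conj G) 2"
  shows "{f \<in> H1 (G\<lparr>carrier := N\<rparr>). conj_invariant G N f}
            \<inter> (\<lambda>f. restrict f N) ` {f \<in> Qm (G\<lparr>carrier := L\<rparr>). conj_invariant G L f}
          = (\<lambda>f. restrict f N) ` {f \<in> H1 (G\<lparr>carrier := L\<rparr>). conj_invariant G L f}"
    (is "?A \<inter> ?B = ?C")
proof -
  interpret group G by (rule grp)
  have Lsub: "subgroup L G" by (rule normal_imp_subgroup[OF LG])
  have Nsub: "subgroup N G" by (rule normal_imp_subgroup[OF NG])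
  show ?thesis
  proof (rule equalityI)
    show "?A \<inter> ?B \<subseteq> ?C"
    proof
      fix f assume "f \<in> ?A \<inter> ?B"
      then obtain \<phi> where f: "f \<in> H1 (G\<lparr>carrier := N\<rparr>)" "conj_invariant G N f"
        and ph: "\<phi> \<in> Qm (G\<lparr>carrier := L\<rparr>)" "conj_invariant G L \<phi>" and fe: "f = restrict \<phi> N"
        by blast
      have phiadd: "\<phi> (x \<otimes>\<^bsub>G\<^esub> y) = \<phi> x + \<phi> y" if "x \<in> N" "y \<in> N" for x y
      proof -
        have "f (x \<otimes>\<^bsub>G\<^esub> y) = f x + f y" using f(1) that by (simp add: real_homs_def)
        moreover have "x \<otimes>\<^bsub>G\<^esub> y \<in> N" using subgroup.m_closed[OF Nsub that] .
        ultimately show ?thesis using that fe by simp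
      qed
      interpret qmctx G L N \<phi>
        unfolding qmctx_def qmctx_axioms_def using grp LG NG NL ph phiadd by blast
      obtain \<psi> where ps: "\<psi> \<in> H1 (G\<lparr>carrier := L\<rparr>)" "conj_invariant G L \<psi>" "\<forall>n\<in>N. \<psi> n = \<phi> n"
        using main[OF hb] by blast
      have "f = restrict \<psi> N" using fe ps(3) by (auto intro: restrict_ext)
      thus "f \<in> ?C" using ps by blast
    qed
  next
    show "?C \<subseteq> ?A \<inter> ?B"
    proof
      fix f assume "f \<in> ?C"
      then obtain \<psi> where ps: "\<psi> \<in> H1 (G\<lparr>carrier := L\<rparr>)" "conj_invariant G L \<psi>"
        and fe: "f = restrict \<psi> N" by blast
      have "restrict \<psi> N \<in> H1 (G\<lparr>carrier := N\<rparr>)"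
        using ps(1) NL subgroup.m_closed[OF Nsub] by (auto simp: real_homs_def) blast
      moreover have "conj_invariant G N (restrict \<psi> N)"
        using ps(2) NL normal.inv_op_closed2[OF NG] by (auto simp: conj_invariant_def)
      moreover have "\<psi> \<in> Qm (G\<lparr>carrier := L\<rparr>)"
        by (rule H1_Qm[OF subgroup.subgroup_is_group[OF Lsub grp] ps(1)])
      ultimately show "f \<in> ?A \<inter> ?B" using fe ps by blast
    qed
  qed
qed
theorem proposition5p8:
  fixes G :: "('a, 'm) monoid_scheme" and L N :: "'a set"
  assumes "group G" and "L \<lhd> G" and "N \<lhd> G" and "N \<subseteq> L"
  shows "(H1 (G\<lparr>carrier := L\<rparr> Mod N) = Qm (G\<lparr>carrier := L\<rparr> Mod N)
          \<and> Hb_inv_vanishes (G\<lparr>carrier := L\<rparr> Mod N) (carrier G) (coset_conj G) 2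
          \<longrightarrow>
          {f \<in> H1 (G\<lparr>carrier := N\<rparr>). conj_invariant G N f}
            \<inter> (\<lambda>f. restrict f N) ` {f \<in> Qm (G\<lparr>carrier := L\<rparr>). conj_invariant G L f}
          = (\<lambda>f. restrict f N) ` {f \<in> H1 (G\<lparr>carrier := L\<rparr>). conj_invariant G L f})
       \<and> (boundedly_acyclic (G\<lparr>carrier := L\<rparr> Mod N) 2
          \<longrightarrow>
          {f \<in> H1 (G\<lparr>carrier := N\<rparr>). conj_invariant G N f}
            \<inter> (\<lambda>f. restrict f N) ` {f \<in> Qm (G\<lparr>carrier := L\<rparr>). conj_invariant G L f}
          = (\<lambda>f. restrict f N) ` {f \<in> H1 (G\<lparr>carrier := L\<rparr>). conj_invariant G L f})"
proof (intro conjI impI)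
  assume "H1 (G\<lparr>carrier := L\<rparr> Mod N) = Qm (G\<lparr>carrier := L\<rparr> Mod N)
          \<and> Hb_inv_vanishes (G\<lparr>carrier := L\<rparr> Mod N) (carrier G) (coset_conj G) 2"
  thus "{f \<in> H1 (G\<lparr>carrier := N\<rparr>). conj_invariant G N f}
            \<inter> (\<lambda>f. restrict f N) ` {f \<in> Qm (G\<lparr>carrier := L\<rparr>). conj_invariant G L f}
          = (\<lambda>f. restrict f N) ` {f \<in> H1 (G\<lparr>carrier := L\<rparr>). conj_invariant G L f}"
    using key[OF assms] by blast
next
  assume "boundedly_acyclic (G\<lparr>carrier := L\<rparr> Mod N) 2"
  hence "Hb_vanishes (G\<lparr>carrier := L\<rparr> Mod N) 2" by (simp add: boundedly_acyclic_def)
  hence "Hb_inv_vanishes (G\<lparr>carrier := L\<rparr> Mod N) (carrier G) (coset_conj G) 2"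
    by (simp add: Hb_vanishes_def Hb_inv_vanishes_def)
  thus "{f \<in> H1 (G\<lparr>carrier := N\<rparr>). conj_invariant G N f}
            \<inter> (\<lambda>f. restrict f N) ` {f \<in> Qm (G\<lparr>carrier := L\<rparr>). conj_invariant G L f}
          = (\<lambda>f. restrict f N) ` {f \<in> H1 (G\<lparr>carrier := L\<rparr>). conj_invariant G L f}"
    using key[OF assms] by blast
qed

end
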